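(* Let $w_1,\ldots,w_n$ be positive weights, $W=\sum_{j=1}^n w_j$, $\tau=W/n$, $w'_i=\lceil w_i/\tau\rceil$ for each $i$, and $W'=\sum_{j=1}^n w'_j$. Let $T'$ be a tree with leaves $\ell_1,\ldots,\ell_n$ and let $c$ be a constant. If the depth of a leaf $\ell_i$ in $T'$ does not exceed $\log(W'/w'_i)+c$, then the depth of $\ell_i$ in $T'$ does not exceed $\min(\log(W/w_i),\log n)+c+1$.
   Context: $\log$ denotes the binary logarithm. *)

theory Defs
  imports Complex_Main
begin

datatype 'a rtree = Leaf 'a | Node "'a rtree list"

fun leaves :: "'a rtree \<Rightarrow> 'a set" where
  "leaves (Leaf x) = {x}"
| "leaves (Node ts) = (\<Union>t\<in>set ts. leaves t)"

inductive leaf_depth :: "'a rtree \<Rightarrow> 'a \<Rightarrow> nat \<Rightarrow> bool" where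
  leaf: "leaf_depth (Leaf x) x 0"
| node: "t \<in> set ts \<Longrightarrow> leaf_depth t x d \<Longrightarrow> leaf_depth (Node ts) x (Suc d)"

end

theory Submission
  imports Defs
begin

theorem lemma2:
  fixes n :: nat and w :: "nat \<Rightarrow> real" and T' :: "nat rtree"
    and c :: real and i :: nat and d :: nat
  assumes pos: "\<forall>j\<in>{1..n}. w j > 0"
    and i: "i \<in> {1..n}"
    and lv: "leaves T' = {1..n}"
    and dep: "leaf_depth T' i d"
    and hyp: "real d \<le> log 2 (real_of_int (\<Sum>j=1..n. \<lceil>w j / ((\<Sum>k=1..n. w k) / real n)\<rceil>)
                             / real_of_int \<lceil>w i / ((\<Sum>k=1..n. w k) / real n)\<rceil>) + c"
  shows "real d \<le> min (log 2 ((\<Sum>k=1..n. w k) / w i)) (log 2 (real n)) + c + 1"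
proof -
  define W where "W = (\<Sum>k=1..n. w k)"
  define t where "t = W / real n"
  have n: "n \<ge> 1" using i by auto
  have wi: "w i > 0" using pos i by auto
  have W: "W > 0" unfolding W_def
    using sum_pos[of "{1..n}" w] pos n by auto
  have t: "t > 0" using W n unfolding t_def by auto
  define W' where "W' = real_of_int (\<Sum>j=1..n. \<lceil>w j / t\<rceil>)"
  define v where "v = real_of_int \<lceil>w i / t\<rceil>"
  have hyp': "real d \<le> log 2 (W' / v) + c" using hyp unfolding W'_def v_def t_def W_def by simp
  have sa: "(\<Sum>j=1..n. w j / t) = real n"
  proof -
    have "(\<Sum>j=1..n. w j / t) = W / t" unfolding W_def by (simp add: sum_divide_distrib)
    thus ?thesis using W n unfolding t_def by simp
  qed
  have "W' = (\<Sum>j=1..n. real_of_int \<lceil>w j / t\<rceil>)" unfolding W'_def by simp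
  also have "\<dots> \<le> (\<Sum>j=1..n. w j / t + 1)"
    by (rule sum_mono) (smt (verit) ceiling_correct)
  also have "\<dots> = 2 * real n" using sa by (simp add: sum.distrib)
  finally have W'le: "W' \<le> 2 * real n" .
  have vge: "v \<ge> w i / t" unfolding v_def by (simp add: ceiling_correct)
  have va: "w i / t > 0" using wi t by simp
  have v1: "v \<ge> 1" unfolding v_def using va by (metis ceiling_le_zero not_le of_int_1 of_int_le_iff zle_add1_eq_le add_0)
  have W'pos: "W' > 0"
  proof -
    have "W' = (\<Sum>j=1..n. real_of_int \<lceil>w j / t\<rceil>)" unfolding W'_def by simp
    also have "\<dots> \<ge> (\<Sum>j=1..n. w j / t)"
      by (rule sum_mono) (simp add: ceiling_correct)
    finally show ?thesis using sa n by simp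
  qed
  have q1: "W' / v \<le> 2 * real n / (w i / t)"
    using W'le vge va W'pos by (intro frac_le) auto
  have "2 * real n / (w i / t) = 2 * (W / w i)" unfolding t_def using n by (simp add: field_simps)
  hence q1': "W' / v \<le> 2 * (W / w i)" using q1 by linarith
  have "log 2 (W' / v) \<le> log 2 (2 * (W / w i))"
    using q1' W'pos v1 W wi by (subst log_le_cancel_iff) auto
  also have "\<dots> = 1 + log 2 (W / w i)" using W wi by (subst log_mult) (auto simp del: times_divide_eq_right)
  finally have l1: "log 2 (W' / v) \<le> 1 + log 2 (W / w i)" .
  have q2: "W' / v \<le> 2 * real n" using W'le v1 W'pos
    by (smt (verit) divide_le_eq_1 div_by_1 frac_le)
  have "log 2 (W' / v) \<le> log 2 (2 * real n)"
    using q2 W'pos v1 n by (subst log_le_cancel_iff) auto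
  also have "\<dots> = 1 + log 2 (real n)" using n by (simp add: log_mult)
  finally have l2: "log 2 (W' / v) \<le> 1 + log 2 (real n)" .
  show ?thesis using hyp' l1 l2 unfolding W_def by simp
qed

end
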